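(* Let $f:[0,1]\to[0,1]$ be a surjective continuous function. Then $f$ admits a splitting sequence if and only if $f^2=f\circ f$ admits a splitting sequence.
   Context: For a continuous surjective $g:[0,1]\to[0,1]$: a sequence $(T_n)_{n\in\mathbb N}$ of closed intervals $T_n\subsetneq[0,1]$ (possibly degenerate) is tight for $g$ if $g(T_{n+1})=T_n$ for every $n$ and $T_n$ is nondegenerate for all sufficiently large $n$. A tight sequence $(T_n)$, $T_n=[l_n,r_n]$, is a splitting sequence admitted by $g$ if there are an infinite set $N\subseteq\mathbb N$ and nondegenerate closed intervals $S_n\subseteq[0,1]$ ($n\in N$) with $S_n\cap T_n\subseteq\{l_n,r_n\}$ and $g(S_n)=g(T_n)$ for all $n\in N$. *)

theory Defs
  imports "HOL-Analysis.Analysis"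
begin

definition proper_closed_subinterval :: "real \<Rightarrow> real \<Rightarrow> bool" where
  "proper_closed_subinterval l r \<longleftrightarrow>
     l \<le> r \<and> {l..r} \<subseteq> {0..1} \<and> {l..r} \<noteq> {0..1}"

definition tight :: "(real \<Rightarrow> real) \<Rightarrow> (nat \<Rightarrow> real) \<Rightarrow> (nat \<Rightarrow> real) \<Rightarrow> bool" where
  "tight g l r \<longleftrightarrow>
     (\<forall>n. proper_closed_subinterval (l n) (r n)) \<and>
     (\<forall>n. g ` {l (Suc n)..r (Suc n)} = {l n..r n}) \<and>
     (\<exists>m. \<forall>n\<ge>m. l n < r n)"

definition splitting_sequence :: "(real \<Rightarrow> real) \<Rightarrow> (nat \<Rightarrow> real) \<Rightarrow> (nat \<Rightarrow> real) \<Rightarrow> bool" where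
  "splitting_sequence g l r \<longleftrightarrow>
     tight g l r \<and>
     (\<exists>N :: nat set. infinite N \<and>
        (\<forall>n\<in>N. \<exists>a b. a < b \<and> {a..b} \<subseteq> {0..1} \<and>
              {a..b} \<inter> {l n..r n} \<subseteq> {l n, r n} \<and>
              g ` {a..b} = g ` {l n..r n}))"

definition admits_splitting_sequence :: "(real \<Rightarrow> real) \<Rightarrow> bool" where
  "admits_splitting_sequence g \<longleftrightarrow> (\<exists>l r. splitting_sequence g l r)"

end

theory Submission
  imports Defs
begin

definition mi :: "(real \<Rightarrow> real) \<Rightarrow> real \<Rightarrow> real \<Rightarrow> real \<Rightarrow> real \<Rightarrow> bool" where
  "mi f c d a b \<longleftrightarrow> a < b \<and> f ` {a..b} = {c..d} \<and> f a \<in> {c,d} \<and> f b \<in> {c,d} \<and>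
     (\<forall>x. a < x \<and> x < b \<longrightarrow> f x \<noteq> c \<and> f x \<noteq> d)"

lemma mi_disj:
  assumes "mi f c d a b" "mi f c d a' b'" "(a',b') \<noteq> (a,b)"
  shows "{a'..b'} \<inter> {a..b} \<subseteq> {a,b}"
proof
  fix x assume x: "x \<in> {a'..b'} \<inter> {a..b}"
  show "x \<in> {a,b}"
  proof (rule ccontr)
    assume "x \<notin> {a,b}"
    with x have ax: "a < x" "x < b" by auto
    with assms(1) have fx: "f x \<noteq> c" "f x \<noteq> d" unfolding mi_def by auto
    with assms(2) x have ax': "a' < x" "x < b'" unfolding mi_def
      by (metis atLeastAtMost_iff IntD1 insert_iff order_le_less singletonD)+
    have "a' \<le> a"
    proof (rule ccontr)
      assume "\<not> a' \<le> a" then have "a < a'" "a' < b" using ax ax' by auto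
      with assms show False unfolding mi_def by auto
    qed
    moreover have "a \<le> a'"
    proof (rule ccontr)
      assume "\<not> a \<le> a'" then have "a' < a" "a < b'" using ax ax' by auto
      with assms show False unfolding mi_def by auto
    qed
    moreover have "b' \<le> b"
    proof (rule ccontr)
      assume "\<not> b' \<le> b" then have "a < b" "b < b'" "a' < b" using ax ax' by auto
      with assms show False unfolding mi_def by auto
    qed
    moreover have "b \<le> b'"
    proof (rule ccontr)
      assume "\<not> b \<le> b'" then have "a < b'" "b' < b" "a' < b'" using ax ax' by auto
      with assms show False unfolding mi_def by auto
    qed
    ultimately show False using assms(3) by auto
  qed
qed

lemma mi_exists_aux:
  fixes f :: "real \<Rightarrow> real"
  assumes pq: "p \<le> q" and cont: "continuous_on {p..q} f" and fp: "f p = u" and fq: "f q = v"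
    and cd: "c < d" and uv: "{u,v} = {c,d}"
  shows "\<exists>a b. p \<le> a \<and> b \<le> q \<and> mi f c d a b"
proof -
  have uv': "u \<noteq> v" using cd uv by auto
  define Z where "Z = {x\<in>{p..q}. f x = v}"
  have Zc: "closed Z" unfolding Z_def by (rule continuous_closed_preimage_constant) (use cont in auto)
  have qZ: "q \<in> Z" using pq fq unfolding Z_def by auto
  have Zb: "bdd_below Z" unfolding Z_def by (rule bdd_belowI[of _ p]) auto
  define b where "b = Inf Z"
  have bZ: "b \<in> Z" unfolding b_def using closed_contains_Inf[OF _ Zb Zc] qZ by auto
  have bmin: "\<And>x. x \<in> Z \<Longrightarrow> b \<le> x" unfolding b_def using Zb cInf_lower by blast
  have pb: "p \<le> b" "b \<le> q" "f b = v" using bZ unfolding Z_def by auto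
  define Z' where "Z' = {x\<in>{p..b}. f x = u}"
  have Zc': "closed Z'" unfolding Z'_def
    by (rule continuous_closed_preimage_constant) (use cont pb in \<open>auto intro: continuous_on_subset\<close>)
  have pZ': "p \<in> Z'" using pb fp unfolding Z'_def by auto
  have Zb': "bdd_above Z'" unfolding Z'_def by (rule bdd_aboveI[of _ b]) auto
  define a where "a = Sup Z'"
  have aZ: "a \<in> Z'" unfolding a_def using closed_contains_Sup[OF _ Zb' Zc'] pZ' by auto
  have amax: "\<And>x. x \<in> Z' \<Longrightarrow> x \<le> a" unfolding a_def using Zb' cSup_upper by blast
  have pa: "p \<le> a" "a \<le> b" "f a = u" using aZ unfolding Z'_def by auto
  have ab: "a < b" using pa pb uv' by (metis order_le_less)
  have int: "\<forall>x. a < x \<and> x < b \<longrightarrow> f x \<noteq> c \<and> f x \<noteq> d"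
  proof (intro allI impI)
    fix x assume x: "a < x \<and> x < b"
    have "f x \<noteq> v" using bmin[of x] x pa pb unfolding Z_def by auto
    moreover have "f x \<noteq> u" using amax[of x] x pa pb unfolding Z'_def by auto
    ultimately show "f x \<noteq> c \<and> f x \<noteq> d" using uv by auto
  qed
  have contab: "continuous_on {a..b} f" using cont pa pb by (auto intro: continuous_on_subset)
  have endp: "{f a, f b} = {c,d}" using pa pb uv by auto
  have sub1: "{c..d} \<subseteq> f ` {a..b}"
  proof -
    have "connected (f ` {a..b})" using contab connected_continuous_image connected_Icc by blast
    moreover have "c \<in> f ` {a..b}" "d \<in> f ` {a..b}" using endp ab
      by (metis atLeastAtMost_iff image_eqI insertCI insertE less_eq_real_def order_refl singletonD)+
    ultimately show ?thesis using connected_contains_Icc by blast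
  qed
  have sub2: "f ` {a..b} \<subseteq> {c..d}"
  proof
    fix y assume "y \<in> f ` {a..b}"
    then obtain x where x: "x \<in> {a..b}" "y = f x" by auto
    show "y \<in> {c..d}"
    proof (cases "x = a \<or> x = b")
      case True
      have "f a \<in> {c..d}" "f b \<in> {c..d}" using pa pb uv cd by (auto simp: doubleton_eq_iff)
      then show ?thesis using x True by auto
    next
      case False
      then have xi: "a < x" "x < b" using x by auto
      have "\<not> f x < c"
      proof
        assume fxc: "f x < c"
        have "f a = d \<or> f b = d" using endp cd by (auto simp: doubleton_eq_iff)
        then obtain e where e: "e \<in> {a,b}" "f e = d" by blast
        define J where "J = {min x e..max x e}"
        have Jsub: "J \<subseteq> {a..b}" using e xi unfolding J_def by auto
        have "connected (f ` J)" unfolding J_def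
          using contab Jsub connected_continuous_image connected_Icc continuous_on_subset J_def by metis
        moreover have "f x \<in> f ` J" "f e \<in> f ` J" unfolding J_def by auto
        ultimately have "{f x..f e} \<subseteq> f ` J" using connected_contains_Icc by blast
        then have "c \<in> f ` J" using fxc e cd by auto
        then obtain y where y: "y \<in> J" "f y = c" by auto
        have "y \<noteq> e" using y e cd by auto
        moreover have "y \<noteq> x" using y fxc by auto
        ultimately have "a < y \<and> y < b" using y(1) e xi unfolding J_def by auto
        then show False using int y by auto
      qed
      moreover have "\<not> f x > d"
      proof
        assume fxc: "f x > d"
        have "f a = c \<or> f b = c" using endp cd by (auto simp: doubleton_eq_iff)
        then obtain e where e: "e \<in> {a,b}" "f e = c" by blast
        define J where "J = {min x e..max x e}"
        have Jsub: "J \<subseteq> {a..b}" using e xi unfolding J_def by auto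
        have "connected (f ` J)" unfolding J_def
          using contab Jsub connected_continuous_image connected_Icc continuous_on_subset J_def by metis
        moreover have "f x \<in> f ` J" "f e \<in> f ` J" unfolding J_def by auto
        ultimately have "{f e..f x} \<subseteq> f ` J" using connected_contains_Icc by blast
        then have "d \<in> f ` J" using fxc e cd by auto
        then obtain y where y: "y \<in> J" "f y = d" by auto
        have "y \<noteq> e" using y e cd by auto
        moreover have "y \<noteq> x" using y fxc by auto
        ultimately have "a < y \<and> y < b" using y(1) e xi unfolding J_def by auto
        then show False using int y by auto
      qed
      ultimately show ?thesis using x by auto
    qed
  qed
  have "mi f c d a b" unfolding mi_def using ab sub1 sub2 endp int by auto
  then show ?thesis using pa pb by auto
qed

lemma mi_exists:
  fixes f :: "real \<Rightarrow> real"
  assumes S: "connected S" and cont: "continuous_on S f" and cd: "c < d" and sub: "{c..d} \<subseteq> f ` S"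
  shows "\<exists>a b. a \<in> S \<and> b \<in> S \<and> mi f c d a b"
proof -
  have "c \<in> f ` S" "d \<in> f ` S" using sub cd by auto
  then obtain p q where p: "p \<in> S" "f p = c" and q: "q \<in> S" "f q = d" by (metis imageE)
  show ?thesis
  proof (cases "p \<le> q")
    case True
    have "{p..q} \<subseteq> S" using connected_contains_Icc S p q by blast
    then obtain a b where "p \<le> a" "b \<le> q" "mi f c d a b"
      using mi_exists_aux[OF True _ p(2) q(2) cd] cont continuous_on_subset by blast
    moreover have "a \<le> b" using calculation unfolding mi_def by auto
    ultimately show ?thesis using \<open>{p..q} \<subseteq> S\<close> by (intro exI[of _ a] exI[of _ b]) auto
  next
    case False
    then have qp: "q \<le> p" by auto
    have "{q..p} \<subseteq> S" using connected_contains_Icc S p q by blast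
    then obtain a b where "q \<le> a" "b \<le> p" "mi f c d a b"
      using mi_exists_aux[OF qp _ q(2) p(2) cd] cont continuous_on_subset by blast
    moreover have "a \<le> b" using calculation unfolding mi_def by auto
    ultimately show ?thesis using \<open>{q..p} \<subseteq> S\<close> by (intro exI[of _ a] exI[of _ b]) auto
  qed
qed


lemma ff_img: "(f \<circ> f) ` X = f ` f ` X" by auto

lemma fwd:
  fixes f :: "real \<Rightarrow> real"
  assumes "splitting_sequence f l r"
  shows "admits_splitting_sequence (f \<circ> f)"
proof -
  from assms obtain N where tg: "tight f l r" and Ninf: "infinite N" and
    spl: "\<forall>n\<in>N. \<exists>a b. a < b \<and> {a..b} \<subseteq> {0..1} \<and>
              {a..b} \<inter> {l n..r n} \<subseteq> {l n, r n} \<and> f ` {a..b} = f ` {l n..r n}"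
    unfolding splitting_sequence_def by blast
  from tg have pr: "\<forall>n. proper_closed_subinterval (l n) (r n)"
    and im: "\<forall>n. f ` {l (Suc n)..r (Suc n)} = {l n..r n}"
    and ev: "\<exists>m. \<forall>n\<ge>m. l n < r n" unfolding tight_def by auto
  have NU: "N = {n\<in>N. n mod 2 = 0} \<union> {n\<in>N. n mod 2 = 1}" by auto
  obtain p :: nat where p: "infinite {n\<in>N. n mod 2 = p}"
  proof (cases "finite {n\<in>N. n mod 2 = 0}")
    case True
    then have "infinite {n\<in>N. n mod 2 = 1}" using Ninf NU finite_UnI by metis
    then show ?thesis using that by blast
  next
    case False then show ?thesis using that by blast
  qed
  define N' where "N' = {k. 2*k+p \<in> N}"
  have "{n\<in>N. n mod 2 = p} \<subseteq> (\<lambda>k. 2*k+p) ` N'"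
  proof
    fix n assume n: "n \<in> {n\<in>N. n mod 2 = p}"
    have e1: "n = 2*(n div 2) + n mod 2" by simp
    have e2: "n mod 2 = p" using n by simp
    have eq: "n = 2*(n div 2) + p" using e1 e2 by linarith
    have "2*(n div 2) + p \<in> N" unfolding eq[symmetric] using n by simp
    then have "n div 2 \<in> N'" unfolding N'_def by simp
    then have "(\<lambda>k. 2*k+p) (n div 2) \<in> (\<lambda>k. 2*k+p) ` N'" by (rule imageI)
    then show "n \<in> (\<lambda>k. 2*k+p) ` N'" using eq by metis
  qed
  then have N'inf: "infinite N'" using p finite_subset finite_imageI by blast
  define l' where "l' k = l (2*k+p)" for k
  define r' where "r' k = r (2*k+p)" for k
  have "tight (f \<circ> f) l' r'"
    unfolding tight_def
  proof (intro conjI allI)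
    fix n show "proper_closed_subinterval (l' n) (r' n)" using pr unfolding l'_def r'_def by auto
  next
    fix n
    have e: "2 * Suc n + p = Suc (Suc (2*n+p))" by simp
    show "(f \<circ> f) ` {l' (Suc n)..r' (Suc n)} = {l' n..r' n}"
      unfolding l'_def r'_def e ff_img using im by presburger
  next
    from ev obtain m where m: "\<forall>n\<ge>m. l n < r n" by auto
    show "\<exists>m. \<forall>n\<ge>m. l' n < r' n" unfolding l'_def r'_def
      by (rule exI[of _ m]) (use m in auto)
  qed
  moreover have "\<forall>k\<in>N'. \<exists>a b. a < b \<and> {a..b} \<subseteq> {0..1} \<and>
              {a..b} \<inter> {l' k..r' k} \<subseteq> {l' k, r' k} \<and> (f\<circ>f) ` {a..b} = (f\<circ>f) ` {l' k..r' k}"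
  proof
    fix k assume "k \<in> N'"
    then have "2*k+p \<in> N" unfolding N'_def by auto
    then obtain a b where ab: "a < b \<and> {a..b} \<subseteq> {0..1} \<and>
              {a..b} \<inter> {l' k..r' k} \<subseteq> {l' k, r' k} \<and> f ` {a..b} = f ` {l' k..r' k}"
      using spl unfolding l'_def r'_def by blast
    then show "\<exists>a b. a < b \<and> {a..b} \<subseteq> {0..1} \<and>
              {a..b} \<inter> {l' k..r' k} \<subseteq> {l' k, r' k} \<and> (f\<circ>f) ` {a..b} = (f\<circ>f) ` {l' k..r' k}"
    proof -
      have "(f\<circ>f)`{a..b} = (f\<circ>f)`{l' k..r' k}" using ab by (simp only: ff_img)
      then show ?thesis using ab by blast
    qed
  qed
  ultimately show ?thesis unfolding admits_splitting_sequence_def splitting_sequence_def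
    using N'inf by blast
qed


lemma bwd:
  fixes f :: "real \<Rightarrow> real"
  assumes cont: "continuous_on {0..1} f" and surj: "f ` {0..1} = {0..1}"
    and ss: "splitting_sequence (f \<circ> f) l r"
  shows "admits_splitting_sequence f"
proof -
  from ss obtain N where tg: "tight (f\<circ>f) l r" and Ninf: "infinite N" and
    spl: "\<forall>n\<in>N. \<exists>a b. a < b \<and> {a..b} \<subseteq> {0..1} \<and>
              {a..b} \<inter> {l n..r n} \<subseteq> {l n, r n} \<and> (f\<circ>f) ` {a..b} = (f\<circ>f) ` {l n..r n}"
    unfolding splitting_sequence_def by blast
  from tg have pr: "\<forall>n. proper_closed_subinterval (l n) (r n)"
    and im0: "\<forall>n. (f\<circ>f) ` {l (Suc n)..r (Suc n)} = {l n..r n}"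
    and ev: "\<exists>m. \<forall>n\<ge>m. l n < r n" unfolding tight_def by auto
  from ev obtain m where m: "\<And>n. n \<ge> m \<Longrightarrow> l n < r n" by auto
  define T where "T k = {l k..r k}" for k
  have im: "f ` f ` T (Suc k) = T k" for k using im0 unfolding T_def ff_img by auto
  have T01: "T k \<subseteq> {0..1}" for k using pr unfolding T_def proper_closed_subinterval_def by auto
  have Tne: "T k \<noteq> {0..1}" for k using pr unfolding T_def proper_closed_subinterval_def by auto
  define US where "US k = (if even k then T (k div 2) else f ` T (Suc (k div 2)))" for k
  have US_img: "f ` US (Suc k) = US k" for k
  proof (cases "even k")
    case True
    then have "odd (Suc k)" by simp
    moreover have "Suc k div 2 = k div 2" using True by simp
    ultimately show ?thesis unfolding US_def using True im by simp
  next
    case False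
    then have "even (Suc k)" by simp
    moreover have "Suc k div 2 = Suc (k div 2)" using False by simp
    ultimately show ?thesis unfolding US_def using False by simp
  qed
  have US01: "US k \<subseteq> {0..1}" for k
  proof -
    have "f ` T j \<subseteq> {0..1}" for j using T01[of j] surj by blast
    then show ?thesis unfolding US_def using T01 by auto
  qed
  have UScont: "continuous_on (US k) f" for k using cont US01 continuous_on_subset by blast
  have UScon: "connected (US k)" for k
  proof -
    have "continuous_on (T j) f" for j using cont T01 continuous_on_subset by blast
    moreover have "connected (T j)" for j unfolding T_def by simp
    ultimately show ?thesis unfolding US_def using connected_continuous_image by auto
  qed
  define K0 where "K0 = 2*m"
  define P where "P j w = (\<lambda>p. fst p \<in> US (K0 + Suc j) \<and> snd p \<in> US (K0 + Suc j) \<and>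
      mi f (fst w) (snd w) (fst p) (snd p))" for j w
  define W where "W = rec_nat (l m, r m) (\<lambda>j w. SOME p. P j w p)"
  have W0: "W 0 = (l m, r m)" unfolding W_def by simp
  have WS: "W (Suc j) = (SOME p. P j (W j) p)" for j unfolding W_def by simp
  have inv: "fst (W j) < snd (W j) \<and> {fst (W j)..snd (W j)} \<subseteq> US (K0 + j)" for j
  proof (induction j)
    case 0
    have "US K0 = T m" unfolding US_def K0_def by simp
    then show ?case using W0 m[of m] unfolding T_def by simp
  next
    case (Suc j)
    have "{fst (W j)..snd (W j)} \<subseteq> f ` US (K0 + Suc j)" using Suc US_img[of "K0 + j"] by simp
    then obtain a b where "a \<in> US (K0 + Suc j)" "b \<in> US (K0 + Suc j)" "mi f (fst (W j)) (snd (W j)) a b"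
      using mi_exists[OF UScon UScont] Suc by blast
    then have "P j (W j) (a,b)" unfolding P_def by simp
    then have PW: "P j (W j) (W (Suc j))" unfolding WS by (rule someI)
    then have "fst (W (Suc j)) < snd (W (Suc j))" unfolding P_def mi_def by auto
    moreover have "{fst (W (Suc j))..snd (W (Suc j))} \<subseteq> US (K0 + Suc j)"
      using PW UScon connected_contains_Icc unfolding P_def by blast
    ultimately show ?case by simp
  qed
  have Wmi: "mi f (fst (W j)) (snd (W j)) (fst (W (Suc j))) (snd (W (Suc j)))" for j
  proof -
    have "{fst (W j)..snd (W j)} \<subseteq> f ` US (K0 + Suc j)" using inv[of j] US_img[of "K0 + j"] by simp
    then obtain a b where "a \<in> US (K0 + Suc j)" "b \<in> US (K0 + Suc j)" "mi f (fst (W j)) (snd (W j)) a b"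
      using mi_exists[OF UScon UScont] inv[of j] by blast
    then have "P j (W j) (a,b)" unfolding P_def by simp
    then have PW: "P j (W j) (W (Suc j))" unfolding WS by (rule someI)
    then show ?thesis unfolding P_def by simp
  qed
  define l' where "l' j = fst (W j)" for j
  define r' where "r' j = snd (W j)" for j
  have lr': "l' j < r' j" for j using inv unfolding l'_def r'_def by auto
  have WU: "{l' j..r' j} \<subseteq> US (K0 + j)" for j using inv unfolding l'_def r'_def by auto
  have Wimg: "f ` {l' (Suc j)..r' (Suc j)} = {l' j..r' j}" for j
    using Wmi[of j] unfolding mi_def l'_def r'_def by auto
  have Wne: "{l' j..r' j} \<noteq> {0..1}" for j
  proof (induction j)
    case 0
    then show ?case using Tne[of m] W0 unfolding T_def l'_def r'_def by simp
  next
    case (Suc j)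
    then show ?case using Wimg[of j] surj by auto
  qed
  have tight': "tight f l' r'" unfolding tight_def proper_closed_subinterval_def
    using lr' WU US01 Wne Wimg by (meson order_less_imp_le order_trans)
  define N' where "N' = {j. \<exists>a b. a < b \<and> {a..b} \<subseteq> {0..1} \<and>
     {a..b} \<inter> {l' j..r' j} \<subseteq> {l' j, r' j} \<and> f ` {a..b} = f ` {l' j..r' j}}"
  have key: "Suc i \<in> N' \<or> Suc (Suc i) \<in> N'"
    if n: "n \<in> N" "n \<ge> Suc m" "Suc i = 2*(n-m) - 1" for n i
  proof -
    obtain n1 where n1: "n = Suc n1" using n(2) by (cases n) auto
    have e0: "K0 + i = 2*n1" using n n1 unfolding K0_def by linarith
    have e1: "K0 + Suc i = Suc (2*n1)" using e0 by simp
    have e2: "K0 + Suc (Suc i) = 2*n" using e0 n1 by simp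
    have U0: "US (K0 + i) = T n1" unfolding e0 US_def by simp
    have U1: "US (K0 + Suc i) = f ` T n" unfolding e1 US_def n1 by simp
    have U2: "US (K0 + Suc (Suc i)) = T n" unfolding e2 US_def by simp
    obtain a b where ab: "a < b" "{a..b} \<subseteq> {0..1}" "{a..b} \<inter> T n \<subseteq> {l n, r n}"
       "(f\<circ>f) ` {a..b} = (f\<circ>f) ` T n" using spl n(1) unfolding T_def by blast
    define B where "B = f ` {a..b}"
    have fB: "f ` B = T n1" using ab(4) im[of n1] unfolding B_def ff_img n1 by simp
    have B01: "B \<subseteq> {0..1}" using ab(2) surj unfolding B_def by blast
    have Bcon: "connected B" unfolding B_def
      using connected_continuous_image connected_Icc cont ab(2) continuous_on_subset by metis
    have Bcont: "continuous_on B f" using cont B01 continuous_on_subset by blast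
    have cd: "{l' i..r' i} \<subseteq> f ` B" using WU[of i] U0 fB by simp
    obtain z1 z2 where z: "z1 \<in> B" "z2 \<in> B" "mi f (l' i) (r' i) z1 z2"
      using mi_exists[OF Bcon Bcont lr'[of i] cd] by blast
    have zB: "{z1..z2} \<subseteq> B" using z Bcon connected_contains_Icc by blast
    have mY: "mi f (l' i) (r' i) (l' (Suc i)) (r' (Suc i))" using Wmi[of i] unfolding l'_def r'_def .
    show ?thesis
    proof (cases "(z1,z2) = (l' (Suc i), r' (Suc i))")
      case True
      then have YB: "{l' (Suc i)..r' (Suc i)} \<subseteq> f ` {a..b}" using zB unfolding B_def by simp
      have abcon: "connected {a..b}" by simp
      have abcont: "continuous_on {a..b} f" using cont ab(2) continuous_on_subset by blast
      obtain s1 s2 where s: "s1 \<in> {a..b}" "s2 \<in> {a..b}" "mi f (l' (Suc i)) (r' (Suc i)) s1 s2"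
        using mi_exists[OF abcon abcont lr'[of "Suc i"] YB] by blast
      have sab: "{s1..s2} \<subseteq> {a..b}" using s by auto
      have s12: "s1 < s2" "f ` {s1..s2} = {l' (Suc i)..r' (Suc i)}" using s(3) unfolding mi_def by auto
      have W2: "{l' (Suc (Suc i))..r' (Suc (Suc i))} \<subseteq> T n" using WU[of "Suc (Suc i)"] U2 by simp
      have "{s1..s2} \<inter> {l' (Suc (Suc i))..r' (Suc (Suc i))} \<subseteq> {l' (Suc (Suc i)), r' (Suc (Suc i))}"
      proof
        fix x assume x: "x \<in> {s1..s2} \<inter> {l' (Suc (Suc i))..r' (Suc (Suc i))}"
        then have "x \<in> {l n, r n}" using sab W2 ab(3) by blast
        moreover have "l n \<le> l' (Suc (Suc i))" "r' (Suc (Suc i)) \<le> r n"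
          using W2 lr'[of "Suc (Suc i)"] unfolding T_def by auto
        ultimately show "x \<in> {l' (Suc (Suc i)), r' (Suc (Suc i))}" using x by auto
      qed
      moreover have "f ` {s1..s2} = f ` {l' (Suc (Suc i))..r' (Suc (Suc i))}"
        using s12(2) Wimg[of "Suc i"] by simp
      moreover have "{s1..s2} \<subseteq> {0..1}" using sab ab(2) by auto
      ultimately have "Suc (Suc i) \<in> N'" unfolding N'_def using s12(1) by blast
      then show ?thesis by simp
    next
      case False
      have "{z1..z2} \<inter> {l' (Suc i)..r' (Suc i)} \<subseteq> {l' (Suc i), r' (Suc i)}"
        using mi_disj[OF mY z(3) False] by blast
      moreover have "f ` {z1..z2} = f ` {l' (Suc i)..r' (Suc i)}"
        using z(3) mY unfolding mi_def by simp
      moreover have "{z1..z2} \<subseteq> {0..1}" using zB B01 by (rule order_trans)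
      moreover have "z1 < z2" using z(3) unfolding mi_def by simp
      ultimately have "Suc i \<in> N'" unfolding N'_def by blast
      then show ?thesis by simp
    qed
  qed
  have "infinite N'"
    unfolding infinite_nat_iff_unbounded_le
  proof
    fix M
    obtain n where n: "n \<in> N" "n \<ge> M + m + 1" using Ninf unfolding infinite_nat_iff_unbounded_le by blast
    define i where "i = 2*(n-m) - 2"
    have "Suc i = 2*(n-m) - 1" using n unfolding i_def by linarith
    then have "Suc i \<in> N' \<or> Suc (Suc i) \<in> N'" using key[of n i] n by linarith
    moreover have "Suc i \<ge> M" using n unfolding i_def by linarith
    ultimately show "\<exists>j\<ge>M. j \<in> N'" by (meson le_Suc_eq)
  qed
  then show ?thesis unfolding admits_splitting_sequence_def splitting_sequence_def
    using tight' unfolding N'_def by blast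
qed
theorem lemma3p15:
  fixes f :: "real \<Rightarrow> real"
  assumes "continuous_on {0..1} f"
    and "f ` {0..1} = {0..1}"
  shows "admits_splitting_sequence f \<longleftrightarrow> admits_splitting_sequence (f \<circ> f)"
proof
  assume "admits_splitting_sequence f"
  then show "admits_splitting_sequence (f \<circ> f)"
    using fwd unfolding admits_splitting_sequence_def by blast
next
  assume "admits_splitting_sequence (f \<circ> f)"
  then show "admits_splitting_sequence f"
    using bwd[OF assms] unfolding admits_splitting_sequence_def by blast
qed

end
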